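(* Let $p_0<p_g<1-S$ and set $\hat\theta_g:=(p_g+S)\wedge1$. Suppose there exist $\mu_g\in(0,1)$, $\bar\theta_g,\bar\theta_m$ and $\hat\theta\in(0,\hat\theta_g)$ with $\bar\theta_g<\bar\theta_m<p_g$ satisfying: (a) $p_g+\bar\theta_g=2\bar\theta_m$; (b) $2\bar\theta_m+2S=\hat\theta+p_g+S$; (c) $\bar\theta_g\ge I$; (d) $\mu_g\bar\theta_g+(1-\mu_g)\bar\theta_m=\mathbb{E}[\theta\mid\theta\le\hat\theta]$; (e) $\bar\theta_g\ge\mathbb{E}[\theta\mid\theta\le F^{-1}(\mu_gF(\hat\theta))]$; (f) for all $p'\in(\bar\theta_g,p_g]$: $\dfrac{\mu_gF(\hat\theta)\bar\theta_g+\int_{\hat\theta}^{p'+S}\theta f(\theta)d\theta}{\mu_gF(\hat\theta)+F(p'+S)-F(\hat\theta)}-p'<0$; (g) for all $p'\in(p_g,1-S]$: $\dfrac{(1-\mu_g)F(\hat\theta)\bar\theta_m+\int_{\hat\theta_g}^{p'+S}\theta f(\theta)d\theta}{(1-\mu_g)F(\hat\theta)+F(p'+S)-F(\hat\theta_g)}-p'<0$. Then there exists a short-lived stimulation equilibrium of the two-period model with a transparent bailout at $p_g$, in which types $\theta\le\hat\theta$ sell in both periods (a fraction $\mu_g$ of them, with average value $\bar\theta_g$, to the government at $t=1$ and then at price $\bar\theta_g$ at $t=2$; the rest, with average value $\bar\theta_m$, to the market at price $\bar\theta_m$ in both periods), types in $(\hat\theta,\hat\theta_g]$ sell only to the government at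 $t=1$, and types above $\hat\theta_g$ never sell.
   Context: Two-period model: a continuum of firms with privately known type $\theta\in[0,1]$, cdf $F$, density $f>0$, $f$ strictly log-concave, and for every $b\in(0,1]$ the map $a\mapsto 2\mathbb{E}[\theta\mid a<\theta<b]-\mathbb{E}[\theta\mid\theta\le a]$ is increasing on $(0,b)$. A type-$\theta$ firm holds one unit of an asset worth $\theta$ in each of two periods $t=1,2$. In each period it has a project with cost $I>0$ and net return $S>0$ that can be funded only by selling that period's unit; selling at price $p\ge I$ yields $p+S$ for that period, not selling yields $\theta$. Firms' total payoff is the sum over periods (equilibria in the limit of period-2 weight $\delta\to1$). In each period competitive short-lived risk-neutral buyers make Bertrand price offers, breaking even in expectation (indifferent buyers buy). At $t=1$ only, the government offers to buy one unit at price $p_g$; firms sell their $t=1$ unit to the government, to the market, or not at all. $t=1$ market sales are unobserved at $t=2$; acceptance of the government offer is observed at $t=2$ (transparent bailout), so $t=2$ buyers can make separate offers to recipients and non-recipients. Equilibrium means perfect Bayesian equilibrium. Laissez-faire: $\theta_0\in(0,1)$ uniquely solves $\theta_0-S=\mathbb{E}[\theta\mid\theta\le\theta_0]$, $p_0:=\mathbb{E}[\theta\mid\theta\le\theta_0]\ge I$. Every equilibrium has cutoffs $0<\hat\theta\le\hat\theta_g\le\theta_2$: types $\le\hat\theta$ sell in both periods, types in $(\hat\theta,\hat\theta_g]$ sell only at $t=1$ to the government, types in $(\hat\theta_g,\theta_2]$ sell only at $t=2$, higher types never sell. A short-lived stimulation equilibrium is one with $\hat\theta_g=\theta_2$. 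*)

theory Defs
  imports "HOL-Analysis.Analysis"
begin

datatype act = Gov | Mkt | NoSale

definition Fc :: "(real \<Rightarrow> real) \<Rightarrow> real \<Rightarrow> real" where
  "Fc f x = integral ({0..1} \<inter> {..x}) f"

definition cexp_le :: "(real \<Rightarrow> real) \<Rightarrow> real \<Rightarrow> real" where
  "cexp_le f a = integral ({0..1} \<inter> {..a}) (\<lambda>t. t * f t) / Fc f a"

definition cexp_between :: "(real \<Rightarrow> real) \<Rightarrow> real \<Rightarrow> real \<Rightarrow> real" where
  "cexp_between f a b =
     integral ({0..1} \<inter> {a<..<b}) (\<lambda>t. t * f t) / (Fc f b - Fc f a)"

definition Finv :: "(real \<Rightarrow> real) \<Rightarrow> real \<Rightarrow> real" where
  "Finv f y = (THE x. x \<in> {0..1} \<and> Fc f x = y)"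

definition strictly_concave_on :: "real set \<Rightarrow> (real \<Rightarrow> real) \<Rightarrow> bool" where
  "strictly_concave_on A g \<longleftrightarrow>
     (\<forall>x\<in>A. \<forall>y\<in>A. \<forall>u::real. x \<noteq> y \<and> 0 < u \<and> u < 1 \<longrightarrow>
        g ((1 - u) * x + u * y) > (1 - u) * g x + u * g y)"

definition type_density :: "(real \<Rightarrow> real) \<Rightarrow> bool" where
  "type_density f \<longleftrightarrow>
     (\<forall>t\<in>{0..1}. f t > 0) \<and> f integrable_on {0..1} \<and> integral {0..1} f = 1 \<and>
     strictly_concave_on {0..1} (\<lambda>t. ln (f t)) \<and>
     (\<forall>b\<in>{0<..1}. strict_mono_on {0<..<b}
         (\<lambda>a. 2 * cexp_between f a b - cexp_le f a))"

text \<open>Payoff in one period from selling the unit at price p (the project, with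
  cost I and net return S, is funded only if p \<ge> I).\<close>
definition sale_pay :: "real \<Rightarrow> real \<Rightarrow> real \<Rightarrow> real" where
  "sale_pay I S p = (if p \<ge> I then p + S else p)"

text \<open>Total payoff (periods 1 and 2, undiscounted) of a type-t firm choosing t=1
  action a when the t=1 market price is p, the government price is pg, and the
  t=2 prices are p2g (recipients) and p2n (non-recipients); at t=2 the firm
  behaves optimally.\<close>
definition pay1 :: "real \<Rightarrow> real \<Rightarrow> real \<Rightarrow> real \<Rightarrow> real \<Rightarrow> real \<Rightarrow> real \<Rightarrow> act \<Rightarrow> real" where
  "pay1 I S pg p2g p2n t p a = (case a of
      Gov \<Rightarrow> sale_pay I S pg + max (sale_pay I S p2g) t
    | Mkt \<Rightarrow> sale_pay I S p + max (sale_pay I S p2n) t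
    | NoSale \<Rightarrow> t + max (sale_pay I S p2n) t)"

text \<open>Competitive (Bertrand, break-even) pricing in one market segment:
  w q t is the density of sellers of type t when the best offer is q.\<close>
definition competitive_price :: "(real \<Rightarrow> real \<Rightarrow> real) \<Rightarrow> real \<Rightarrow> bool" where
  "competitive_price w p \<longleftrightarrow>
     (integral {0..1} (w p) > 0 \<longrightarrow>
        integral {0..1} (\<lambda>t. t * w p t) = p * integral {0..1} (w p)) \<and>
     (\<forall>q>p. integral {0..1} (\<lambda>t. t * w q t) - q * integral {0..1} (w q) \<le> 0)"

text \<open>Perfect Bayesian equilibrium with a transparent bailout at price pg.
  s1 t p a : probability that type t takes t=1 action a when the best t=1 market
     offer is p;
  s2 t h q : probability that type t with t=1 action h sells at t=2 when its best
     t=2 offer is q;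
  p1 : t=1 market price; p2g / p2n : t=2 prices to recipients / non-recipients
  (acceptance of the government offer is observed at t=2, t=1 market sales are not).\<close>
definition transparent_equilibrium ::
  "(real \<Rightarrow> real) \<Rightarrow> real \<Rightarrow> real \<Rightarrow> real \<Rightarrow>
   (real \<Rightarrow> real \<Rightarrow> act \<Rightarrow> real) \<Rightarrow> (real \<Rightarrow> act \<Rightarrow> real \<Rightarrow> real) \<Rightarrow>
   real \<Rightarrow> real \<Rightarrow> real \<Rightarrow> bool" where
  "transparent_equilibrium f I S pg s1 s2 p1 p2g p2n \<longleftrightarrow>
     (\<forall>t p a. 0 \<le> s1 t p a) \<and>
     (\<forall>t p. s1 t p Gov + s1 t p Mkt + s1 t p NoSale = 1) \<and>
     (\<forall>t h q. 0 \<le> s2 t h q \<and> s2 t h q \<le> 1) \<and>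
     (\<forall>p a. (\<lambda>t. s1 t p a) \<in> borel_measurable borel) \<and>
     (\<forall>h q. (\<lambda>t. s2 t h q) \<in> borel_measurable borel) \<and>
     \<comment> \<open>sequential rationality of firms at t=2, for every offered price\<close>
     (\<forall>t\<in>{0..1}. \<forall>h q. (sale_pay I S q > t \<longrightarrow> s2 t h q = 1) \<and>
                       (sale_pay I S q < t \<longrightarrow> s2 t h q = 0)) \<and>
     \<comment> \<open>optimality of firms at t=1, for every offered market price\<close>
     (\<forall>t\<in>{0..1}. \<forall>p a. s1 t p a > 0 \<longrightarrow>
        (\<forall>b. pay1 I S pg p2g p2n t p b \<le> pay1 I S pg p2g p2n t p a)) \<and>
     \<comment> \<open>competitive buyers at t=1\<close>
     competitive_price (\<lambda>q t. f t * s1 t q Mkt) p1 \<and>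
     \<comment> \<open>competitive buyers at t=2, recipients\<close>
     competitive_price (\<lambda>q t. f t * s1 t p1 Gov * s2 t Gov q) p2g \<and>
     \<comment> \<open>competitive buyers at t=2, non-recipients\<close>
     competitive_price
       (\<lambda>q t. f t * (s1 t p1 Mkt * s2 t Mkt q + s1 t p1 NoSale * s2 t NoSale q)) p2n"

end

theory Submission
  imports Defs
begin

lemma td_pos: "type_density f \<Longrightarrow> t \<in> {0..1} \<Longrightarrow> f t > 0"
  unfolding type_density_def by auto

lemma td_int: "type_density f \<Longrightarrow> 0 \<le> a \<Longrightarrow> b \<le> 1 \<Longrightarrow> f integrable_on {a..b}"
  unfolding type_density_def
  by (cases "a \<le> b") (auto intro: integrable_subinterval_real)

lemma td_conc:
  assumes "type_density f" "x \<in> {0..1}" "y \<in> {0..1}" "0 \<le> u" "u \<le> 1"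
  shows "ln (f ((1 - u) * x + u * y)) \<ge> (1 - u) * ln (f x) + u * ln (f y)"
proof (cases "x = y \<or> u = 0 \<or> u = 1")
  case True
  then show ?thesis by (auto simp: algebra_simps)
next
  case False
  then have "x \<noteq> y" "0 < u" "u < 1" using assms by auto
  moreover have "strictly_concave_on {0..1} (\<lambda>t. ln (f t))" using assms(1) unfolding type_density_def by blast
  ultimately have "ln (f ((1 - u) * x + u * y)) > (1 - u) * ln (f x) + u * ln (f y)"
    using assms(2,3) unfolding strictly_concave_on_def by blast
  then show ?thesis by simp
qed

lemma Icc_leb: "{a..b::real} \<in> sets lebesgue"
  by (metis box_real(2) fmeasurableD lmeasurable_cbox)

lemma td_tf_int: "type_density f \<Longrightarrow> 0 \<le> a \<Longrightarrow> b \<le> 1 \<Longrightarrow> (\<lambda>t. t * f t) integrable_on {a..b}"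
proof -
  assume td: "type_density f" and ab: "0 \<le> a" "b \<le> 1"
  have fi: "f integrable_on {0..1}" using td_int[OF td] by auto
  have fa: "f absolutely_integrable_on {0..1}"
    by (rule nonnegative_absolutely_integrable_1[OF fi]) (use td_pos[OF td] in force)
  have "(\<lambda>t. t * f t) absolutely_integrable_on {0..1}"
  proof (rule absolutely_integrable_bounded_measurable_product_real[OF _ _ _ fa])
    show "(\<lambda>t::real. t) \<in> borel_measurable (lebesgue_on {0..1})"
      by (rule continuous_imp_measurable_on_sets_lebesgue[OF continuous_on_id Icc_leb])
    show "{0..1::real} \<in> sets lebesgue" by (rule Icc_leb)
    show "bounded ((\<lambda>t. t) ` {0..1::real})" by simp
  qed
  then have "(\<lambda>t. t * f t) integrable_on {0..1}" by (rule set_lebesgue_integral_eq_integral(1))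
  moreover have "{a..b} \<subseteq> {0..1}" using ab by auto
  ultimately show ?thesis by (rule integrable_subinterval_real)
qed

lemma td_lower:
  assumes td: "type_density f" and "0 \<le> a" "a \<le> t" "t \<le> b" "b \<le> 1"
  shows "f t \<ge> min (f a) (f b)"
proof (cases "a = b")
  case True then show ?thesis using assms by simp
next
  case False
  define u where "u = (t - a) / (b - a)"
  have u: "0 \<le> u" "u \<le> 1" using assms False by (auto simp: u_def field_simps)
  have "u * (b - a) = t - a" using False by (simp add: u_def)
  moreover have "(1 - u) * a + u * b = a + u * (b - a)" by (simp add: algebra_simps)
  ultimately have tu: "(1 - u) * a + u * b = t" by simp
  have "ln (f t) \<ge> (1 - u) * ln (f a) + u * ln (f b)"
    using td_conc[OF td, of a b u] assms u tu by auto
  moreover have "(1 - u) * ln (f a) + u * ln (f b) \<ge> (1 - u) * min (ln (f a)) (ln (f b)) + u * min (ln (f a)) (ln (f b))"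
    using u by (intro add_mono mult_left_mono) auto
  ultimately have "ln (f t) \<ge> min (ln (f a)) (ln (f b))" by (simp add: algebra_simps)
  moreover have "f a > 0" "f b > 0" "f t > 0" using td_pos[OF td] assms by auto
  ultimately show ?thesis by (simp add: min_def split: if_splits)
qed

lemma td_Fpos:
  assumes td: "type_density f" and ab: "0 \<le> a" "a < b" "b \<le> 1"
  shows "integral {a..b} f > 0"
proof -
  define m where "m = min (f a) (f b)"
  have m: "m > 0" using td_pos[OF td] ab by (auto simp: m_def)
  have "integral {a..b} (\<lambda>_. m) \<le> integral {a..b} f"
    by (rule integral_le) (use td_int[OF td, of a b] ab td_lower[OF td, of a _ b] in \<open>auto simp: m_def\<close>)
  moreover have "integral {a..b} (\<lambda>_. m) = (b - a) * m" using ab by simp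
  moreover have "(b - a) * m > 0" using m ab by simp
  ultimately show ?thesis by linarith
qed

lemma td_4pt:
  assumes td: "type_density f" and "0 \<le> r" "r \<le> s" "0 \<le> d" "s + d \<le> 1"
  shows "f (s + d) * f r \<le> f (r + d) * f s"
proof (cases "d = 0 \<or> r = s")
  case True then show ?thesis by auto
next
  case False
  define L where "L = s + d - r"
  have L: "L > 0" using False assms by (auto simp: L_def)
  define u where "u = (s - r) / L"
  define v where "v = d / L"
  have uL: "u * L = s - r" "v * L = d" using L by (auto simp: u_def v_def)
  have "(u + v) * L = 1 * L" using uL by (simp add: algebra_simps L_def)
  then have uv5: "u + v = 1" using L by simp
  have u0: "0 \<le> u" unfolding u_def using L assms by (intro divide_nonneg_nonneg) auto
  have v0: "0 \<le> v" unfolding v_def using L assms by (intro divide_nonneg_nonneg) auto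
  have uv: "0 \<le> u" "u \<le> 1" "0 \<le> v" "v \<le> 1" "u + v = 1"
    using u0 v0 uv5 by linarith+
  have e1: "(1 - u) * r + u * (s + d) = s"
  proof -
    have "(1 - u) * r + u * (s + d) = r + u * L" by (simp add: L_def algebra_simps)
    then show ?thesis using uL by simp
  qed
  have e2: "(1 - v) * r + v * (s + d) = r + d"
  proof -
    have "(1 - v) * r + v * (s + d) = r + v * L" by (simp add: L_def algebra_simps)
    then show ?thesis using uL by simp
  qed
  have i1: "ln (f s) \<ge> (1 - u) * ln (f r) + u * ln (f (s + d))"
    using td_conc[OF td, of r "s + d" u] assms uv e1 by auto
  have i2: "ln (f (r + d)) \<ge> (1 - v) * ln (f r) + v * ln (f (s + d))"
    using td_conc[OF td, of r "s + d" v] assms uv e2 by auto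
  have "ln (f (s + d)) + ln (f r) \<le> ln (f (r + d)) + ln (f s)"
  proof -
    have "ln (f (s + d)) + ln (f r) = (1 - u) * ln (f r) + u * ln (f (s + d)) + ((1 - v) * ln (f r) + v * ln (f (s + d)))"
    proof -
      have hv: "v = 1 - u" using uv(5) by simp
      show ?thesis unfolding hv by (simp add: algebra_simps)
    qed
    then show ?thesis using i1 i2 by linarith
  qed
  moreover have "f (s + d) > 0" "f r > 0" "f (r + d) > 0" "f s > 0" using td_pos[OF td] assms by auto
  ultimately have "ln (f (s + d) * f r) \<le> ln (f (r + d) * f s)" by (simp add: ln_mult)
  moreover have "f (s + d) * f r > 0" "f (r + d) * f s > 0" using \<open>f (s + d) > 0\<close> \<open>f r > 0\<close> \<open>f (r + d) > 0\<close> \<open>f s > 0\<close> by auto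
  ultimately show ?thesis by (simp add: ln_le_cancel_iff)
qed

lemma shift_int:
  fixes g :: "real \<Rightarrow> real"
  assumes "(g has_integral i) {a..b}"
  shows "((\<lambda>t. g (t - d)) has_integral i) {a + d..b + d}"
proof -
  have "(g has_integral i) (cbox a b)" using assms by simp
  from has_integral_affinity'[OF this, of 1 "-d"]
  show ?thesis by (simp add: algebra_simps)
qed

lemma psi_mono:
  assumes td: "type_density f" and xy: "0 < x" "x < y" "y \<le> 1"
  shows "integral {0..y} (\<lambda>t. t * f t) / integral {0..y} f - (y - x)
           \<le> integral {0..x} (\<lambda>t. t * f t) / integral {0..x} f"
proof -
  define A where "A = integral {0..y} f"
  define B where "B = integral {0..x} f"
  define TA where "TA = integral {0..y} (\<lambda>t. t * f t)"
  define TB where "TB = integral {0..x} (\<lambda>t. t * f t)"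
  define d where "d = y - x"
  have d: "d > 0" using xy by (simp add: d_def)
  have A: "A > 0" unfolding A_def using td_Fpos[OF td, of 0 y] xy by simp
  have B: "B > 0" unfolding B_def using td_Fpos[OF td, of 0 x] xy by simp
  have fA: "(f has_integral A) {0..y}" unfolding A_def
    using td_int[OF td, of 0 y] xy by (simp add: integrable_integral)
  have fB: "(f has_integral B) {0..x}" unfolding B_def
    using td_int[OF td, of 0 x] xy by (simp add: integrable_integral)
  have tA: "((\<lambda>t. t * f t) has_integral TA) {0..y}" unfolding TA_def
    using td_tf_int[OF td, of 0 y] xy by (simp add: integrable_integral)
  have tB: "((\<lambda>t. t * f t) has_integral TB) {0..x}" unfolding TB_def
    using td_tf_int[OF td, of 0 x] xy by (simp add: integrable_integral)
  define a where "a = (\<lambda>t. f t / A)"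
  define b where "b = (\<lambda>t. if t \<in> {d..y} then f (t - d) / B else 0)"
  have ha: "(a has_integral 1) {0..y}"
    using has_integral_mult_left[OF fA, of "1 / A"] A by (simp add: a_def)
  have hta: "((\<lambda>t. t * a t) has_integral TA / A) {0..y}"
    using has_integral_mult_left[OF tA, of "1 / A"] A by (simp add: a_def)
  have sh1: "((\<lambda>t. f (t - d)) has_integral B) {d..y}"
    using shift_int[OF fB, of d] by (simp add: d_def)
  have sh2: "((\<lambda>t. (t - d) * f (t - d)) has_integral TB) {d..y}"
    using shift_int[OF tB, of d] by (simp add: d_def)
  have sub: "{d..y} \<subseteq> {0..y}" using d by auto
  have hb0: "((\<lambda>t. f (t - d) / B) has_integral 1) {d..y}"
    using has_integral_mult_left[OF sh1, of "1 / B"] B by simp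
  have hb: "(b has_integral 1) {0..y}"
    unfolding b_def by (subst has_integral_restrict[OF sub]) (rule hb0)
  have htb0: "((\<lambda>t. t * (f (t - d) / B)) has_integral (TB / B + d)) {d..y}"
  proof -
    have "((\<lambda>t. (t - d) * f (t - d) / B + d * (f (t - d) / B)) has_integral (TB / B + d * 1)) {d..y}"
      by (intro has_integral_add has_integral_mult_right hb0) (use has_integral_mult_left[OF sh2, of "1 / B"] in simp)
    moreover have "(t - d) * f (t - d) / B + d * (f (t - d) / B) = t * (f (t - d) / B)" for t
      by (simp add: diff_divide_distrib[symmetric] add_divide_distrib[symmetric] algebra_simps)
    ultimately show ?thesis by simp
  qed
  have htb: "((\<lambda>t. t * b t) has_integral (TB / B + d)) {0..y}"
  proof -
    have "((\<lambda>t. if t \<in> {d..y} then t * (f (t - d) / B) else 0) has_integral (TB / B + d)) {0..y}"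
      by (subst has_integral_restrict[OF sub]) (rule htb0)
    moreover have "(if t \<in> {d..y} then t * (f (t - d) / B) else 0) = t * b t" for t
      by (simp add: b_def)
    ultimately show ?thesis by simp
  qed
  define D where "D = {t \<in> {0..y}. b t < a t}"
  define t0 where "t0 = Sup D"
  have f0: "f 0 > 0" using td_pos[OF td] by simp
  have "b 0 = 0" using d by (simp add: b_def)
  then have "0 \<in> D" using f0 A xy by (simp add: D_def a_def)
  then have Dne: "D \<noteq> {}" by blast
  have Dbdd: "bdd_above D" unfolding D_def by (rule bdd_aboveI[of _ y]) auto
  have key: "0 \<le> (t - t0) * (b t - a t)" if t: "t \<in> {0..y}" for t
  proof (cases "t < t0")
    case True
    then obtain s where s: "s \<in> D" "t < s" using less_cSup_iff[OF Dne Dbdd] by (auto simp: t0_def)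
    have "b t < a t"
    proof (cases "t < d")
      case True
      then have "b t = 0" by (simp add: b_def)
      moreover have "a t > 0" using td_pos[OF td, of t] t xy A by (simp add: a_def)
      ultimately show ?thesis by simp
    next
      case False
      have sy: "s \<le> y" "b s < a s" using s by (auto simp: D_def)
      have sd: "s \<in> {d..y}" using False s sy by auto
      have td': "t \<in> {d..y}" using False t by auto
      have bs: "f (s - d) / B < f s / A" using sy sd by (simp add: b_def a_def)
      have 1: "f (s - d) * A < f s * B" using bs A B by (simp add: field_simps)
      have 4: "f (s - d + d) * f (t - d) \<le> f (t - d + d) * f (s - d)"
        by (rule td_4pt[OF td]) (use False s sy d xy in \<open>auto simp: d_def\<close>)
      then have 4: "f s * f (t - d) \<le> f t * f (s - d)" by simp
      have fs: "f s > 0" using td_pos[OF td, of s] sd d xy by (auto simp: d_def)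
      have "f (t - d) * A * f s \<le> f t * f (s - d) * A"
        using mult_right_mono[OF 4, of A] A by (simp add: algebra_simps)
      also have "\<dots> < f t * (f s * B)"
        using mult_strict_left_mono[OF 1, of "f t"] td_pos[OF td, of t] t xy by (simp add: algebra_simps)
      finally have "f (t - d) * A * f s < (f t * B) * f s" by (simp add: algebra_simps)
      then have "f (t - d) * A < f t * B" using fs by simp
      then have "f (t - d) / B < f t / A" using A B by (simp add: field_simps)
      then show ?thesis using td' by (simp add: b_def a_def)
    qed
    then show ?thesis using True by (intro mult_nonpos_nonpos) auto
  next
    case False
    show ?thesis
    proof (cases "t = t0")
      case True then show ?thesis by simp
    next
      case False
      then have "t > t0" using \<open>\<not> t < t0\<close> by simp
      then have "t \<notin> D" using cSup_upper[OF _ Dbdd] by (force simp: t0_def)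
      then have "a t \<le> b t" using t by (auto simp: D_def)
      then show ?thesis using \<open>t > t0\<close> by (intro mult_nonneg_nonneg) auto
    qed
  qed
  have "((\<lambda>t. (t * b t - t * a t) - (t0 * b t - t0 * a t)) has_integral
          ((TB / B + d - TA / A) - (t0 * 1 - t0 * 1))) {0..y}"
    by (intro has_integral_diff has_integral_mult_right htb hta hb ha)
  moreover have "(t * b t - t * a t) - (t0 * b t - t0 * a t) = (t - t0) * (b t - a t)" for t
    by (simp add: algebra_simps)
  ultimately have "((\<lambda>t. (t - t0) * (b t - a t)) has_integral (TB / B + d - TA / A)) {0..y}" by simp
  then have "0 \<le> TB / B + d - TA / A" by (rule has_integral_nonneg) (use key in auto)
  then show ?thesis by (simp add: A_def B_def TA_def TB_def d_def)
qed

lemma Fc_eq: "x \<in> {0..1} \<Longrightarrow> Fc f x = integral {0..x} f"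
proof -
  assume "x \<in> {0..1}"
  then have eq: "{0..1} \<inter> {..x} = {0..x}" by auto
  show ?thesis unfolding Fc_def eq by (rule refl)
qed

lemma Fc_ge: "1 \<le> x \<Longrightarrow> Fc f x = integral {0..1} f"
proof -
  assume "1 \<le> x"
  then have eq: "{0..1} \<inter> {..x} = {0..1::real}" by auto
  show ?thesis unfolding Fc_def eq by (rule refl)
qed

lemma cexp_eq: "x \<in> {0..1} \<Longrightarrow> cexp_le f x = integral {0..x} (\<lambda>t. t * f t) / integral {0..x} f"
proof -
  assume "x \<in> {0..1}"
  then have eq: "{0..1} \<inter> {..x} = {0..x}" by auto
  show ?thesis unfolding cexp_le_def Fc_def eq by (rule refl)
qed

lemma td_one: "type_density f \<Longrightarrow> integral {0..1} f = 1"
  unfolding type_density_def by blast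

lemma int_split:
  assumes td: "type_density f" and "0 \<le> a" "a \<le> b" "b \<le> 1"
  shows "integral {0..b} f = integral {0..a} f + integral {a..b} f"
    "integral {0..b} (\<lambda>t. t * f t) = integral {0..a} (\<lambda>t. t * f t) + integral {a..b} (\<lambda>t. t * f t)"
  using Henstock_Kurzweil_Integration.integral_combine[where a=0 and c=a and b=b and f=f] Henstock_Kurzweil_Integration.integral_combine[where a=0 and c=a and b=b and f="\<lambda>t. t * f t"]
    td_int[OF td, of 0 b] td_tf_int[OF td, of 0 b] assms by auto

lemma Fc_strict:
  assumes td: "type_density f" and "0 \<le> a" "a < b" "b \<le> 1"
  shows "Fc f a < Fc f b"
  using int_split(1)[OF td, of a b] td_Fpos[OF td, of a b] assms Fc_eq[of a f] Fc_eq[of b f] by auto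

lemma Fc_mono:
  assumes td: "type_density f" and "0 \<le> a" "a \<le> b" "b \<le> 1"
  shows "Fc f a \<le> Fc f b"
  using Fc_strict[OF td, of a b] assms by (cases "a = b") auto

lemma Finv:
  assumes td: "type_density f" and v: "0 \<le> v" "v \<le> 1"
  shows "Finv f v \<in> {0..1} \<and> Fc f (Finv f v) = v"
proof -
  have cont: "continuous_on {0..1} (\<lambda>x. integral {0..x} f)"
    by (rule indefinite_integral_continuous_1) (rule td_int[OF td]; simp)
  have cont': "continuous_on {0..1} (Fc f)"
    by (rule continuous_on_eq[OF cont]) (simp add: Fc_eq)
  have F0: "Fc f 0 = 0" by (simp add: Fc_eq)
  have F1: "Fc f 1 = 1" using td_one[OF td] by (simp add: Fc_eq)
  obtain x where x: "0 \<le> x" "x \<le> 1" "Fc f x = v"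
    using IVT'[of "Fc f" 0 v 1, OF _ _ _ cont'] F0 F1 v by auto
  have "\<exists>!x. x \<in> {0..1} \<and> Fc f x = v"
  proof (rule ex1I[of _ x])
    show "x \<in> {0..1} \<and> Fc f x = v" using x by auto
    fix y assume y: "y \<in> {0..1} \<and> Fc f y = v"
    show "y = x"
    proof (rule ccontr)
      assume "y \<noteq> x"
      then consider "y < x" | "x < y" by linarith
      then show False
      proof cases
        case 1 then show False using Fc_strict[OF td, of y x] x y by auto
      next
        case 2 then show False using Fc_strict[OF td, of x y] x y by auto
      qed
    qed
  qed
  then show ?thesis unfolding Finv_def by (rule theI')
qed

lemma piece2:
  assumes td: "type_density f" and hl: "0 < h" "h \<le> l" "l \<le> u" "u \<le> 1"
    and hv1: "((\<lambda>t. f t * v t) has_integral M) {0..h}"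
    and hv2: "((\<lambda>t. t * f t * v t) has_integral MT) {0..h}"
    and W: "\<And>t. t \<in> {0..1} \<Longrightarrow> W t = (if t \<le> h then f t * v t else if l < t \<and> t \<le> u then f t else 0)"
  shows "(W has_integral (M + integral {l..u} f)) {0..1}"
    "((\<lambda>t. t * W t) has_integral (MT + integral {l..u} (\<lambda>t. t * f t))) {0..1}"
proof -
  have s1: "{0..h} \<subseteq> {0..1}" "{l..u} \<subseteq> {0..1}" using hl by auto
  have i1: "((\<lambda>t. if t \<in> {0..h} then f t * v t else 0) has_integral M) {0..1}"
    using hv1 s1 by (subst has_integral_restrict) auto
  have i2: "((\<lambda>t. if t \<in> {l..u} then f t else 0) has_integral integral {l..u} f) {0..1}"
    using td_int[OF td, of l u] hl s1 by (subst has_integral_restrict) (auto simp: integrable_integral)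
  have j1: "((\<lambda>t. if t \<in> {0..h} then t * f t * v t else 0) has_integral MT) {0..1}"
    using hv2 s1 by (subst has_integral_restrict) auto
  have j2: "((\<lambda>t. if t \<in> {l..u} then t * f t else 0) has_integral integral {l..u} (\<lambda>t. t * f t)) {0..1}"
    using td_tf_int[OF td, of l u] hl s1 by (subst has_integral_restrict) (auto simp: integrable_integral)
  have eq1: "(if t \<in> {0..h} then f t * v t else 0) + (if t \<in> {l..u} then f t else 0) = W t"
    if "t \<in> {0..1} - {l}" for t
    using that hl W[of t] by auto
  have eq2: "(if t \<in> {0..h} then t * f t * v t else 0) + (if t \<in> {l..u} then t * f t else 0) = t * W t"
    if "t \<in> {0..1} - {l}" for t
    using that hl W[of t] by auto
  show "(W has_integral (M + integral {l..u} f)) {0..1}"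
    using has_integral_add[OF i1 i2] has_integral_spike_finite_eq[of "{l}" "{0..1}", OF _ eq1] by auto
  show "((\<lambda>t. t * W t) has_integral (MT + integral {l..u} (\<lambda>t. t * f t))) {0..1}"
    using has_integral_add[OF j1 j2] has_integral_spike_finite_eq[of "{l}" "{0..1}", OF _ eq2] by auto
qed

lemma seg:
  assumes td: "type_density f" and c: "0 < c"
    and W: "\<And>t. t \<in> {0..1} \<Longrightarrow> W t = (if t < c then f t else 0)"
  shows "(W has_integral integral {0..min c 1} f) {0..1}"
    "((\<lambda>t. t * W t) has_integral integral {0..min c 1} (\<lambda>t. t * f t)) {0..1}"
proof -
  have s1: "{0..min c 1} \<subseteq> {0..1}" by auto
  have i1: "((\<lambda>t. if t \<in> {0..min c 1} then f t else 0) has_integral integral {0..min c 1} f) {0..1}"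
    using td_int[OF td, of 0 "min c 1"] s1 by (subst has_integral_restrict) (auto simp: integrable_integral)
  have j1: "((\<lambda>t. if t \<in> {0..min c 1} then t * f t else 0) has_integral integral {0..min c 1} (\<lambda>t. t * f t)) {0..1}"
    using td_tf_int[OF td, of 0 "min c 1"] s1 by (subst has_integral_restrict) (auto simp: integrable_integral)
  have eq1: "(if t \<in> {0..min c 1} then f t else 0) = W t" if "t \<in> {0..1} - {min c 1}" for t
    using that W[of t] by auto
  have eq2: "(if t \<in> {0..min c 1} then t * f t else 0) = t * W t" if "t \<in> {0..1} - {min c 1}" for t
    using that W[of t] by auto
  show "(W has_integral integral {0..min c 1} f) {0..1}"
    using i1 has_integral_spike_finite_eq[of "{min c 1}" "{0..1}", OF _ eq1] by auto
  show "((\<lambda>t. t * W t) has_integral integral {0..min c 1} (\<lambda>t. t * f t)) {0..1}"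
    using j1 has_integral_spike_finite_eq[of "{min c 1}" "{0..1}", OF _ eq2] by auto
qed


locale B1 =
  fixes f :: "real \<Rightarrow> real"
    and I S \<theta>0 p0 pg \<mu>g \<theta>bg \<theta>bm \<theta>h :: real
  assumes dens: "type_density f"
    and I_pos: "I > 0" and S_pos: "S > 0"
    and theta0: "0 < \<theta>0" "\<theta>0 < 1" "\<theta>0 - S = cexp_le f \<theta>0"
    and p0_def: "p0 = cexp_le f \<theta>0" and p0_I: "p0 \<ge> I"
    and pg: "p0 < pg" "pg < 1 - S"
    and mu: "0 < \<mu>g" "\<mu>g < 1"
    and ord: "\<theta>bg < \<theta>bm" "\<theta>bm < pg"
    and th: "0 < \<theta>h" "\<theta>h < min (pg + S) 1"
    and a: "pg + \<theta>bg = 2 * \<theta>bm"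
    and b: "2 * \<theta>bm + 2 * S = \<theta>h + pg + S"
    and c: "\<theta>bg \<ge> I"
    and d: "\<mu>g * \<theta>bg + (1 - \<mu>g) * \<theta>bm = cexp_le f \<theta>h"
    and e: "\<theta>bg \<ge> cexp_le f (Finv f (\<mu>g * Fc f \<theta>h))"
    and f_dev: "\<forall>p'\<in>{\<theta>bg<..pg}.
       (\<mu>g * Fc f \<theta>h * \<theta>bg + integral {\<theta>h..p' + S} (\<lambda>t. t * f t)) /
       (\<mu>g * Fc f \<theta>h + Fc f (p' + S) - Fc f \<theta>h) - p' < 0"
    and g_dev: "\<forall>p'\<in>{pg<..1 - S}.
       ((1 - \<mu>g) * Fc f \<theta>h * \<theta>bm + integral {min (pg + S) 1..p' + S} (\<lambda>t. t * f t)) /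
       ((1 - \<mu>g) * Fc f \<theta>h + Fc f (p' + S) - Fc f (min (pg + S) 1)) - p' < 0"
begin

definition "Fh = Fc f \<theta>h"
definition "Th = integral {0..\<theta>h} (\<lambda>t. t * f t)"
definition "xl = Finv f (\<mu>g * Fh)"
definition "Tx = integral {0..xl} (\<lambda>t. t * f t)"
definition "lam = (\<mu>g * Th - \<mu>g * Fh * \<theta>bg) / (\<mu>g * Th - Tx)"
definition "w t = lam * (if t \<le> xl then 1 else 0) + (1 - lam) * \<mu>g"

lemma thh: "\<theta>h = \<theta>bg + S" using a b by linarith
lemma pgS: "pg + S < 1" using pg by linarith
lemma minpg: "min (pg + S) 1 = pg + S" using pgS by simp
lemma th1: "\<theta>h < 1" "\<theta>h < pg + S" using th minpg by auto
lemma pgI: "pg \<ge> I" using pg p0_I by linarith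

lemma Fh_eq: "Fh = integral {0..\<theta>h} f" using Fc_eq[of \<theta>h f] th th1 by (simp add: Fh_def)
lemma Fh_pos: "Fh > 0" using td_Fpos[OF dens, of 0 \<theta>h] th th1 Fh_eq by simp
lemma Fh_le1: "Fh \<le> 1"
  using Fc_mono[OF dens, of \<theta>h 1] th th1 Fc_ge[of 1 f] td_one[OF dens] by (simp add: Fh_def)
lemma cexp_h: "Th / Fh = \<mu>g * \<theta>bg + (1 - \<mu>g) * \<theta>bm"
  using d cexp_eq[of \<theta>h f] th th1 Fh_eq by (simp add: Th_def)
lemma Th_eq: "Th = Fh * (\<mu>g * \<theta>bg + (1 - \<mu>g) * \<theta>bm)"
  using cexp_h Fh_pos by (simp add: field_simps)

lemma xl: "xl \<in> {0..1}" "Fc f xl = \<mu>g * Fh"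
proof -
  have "0 \<le> \<mu>g * Fh" "\<mu>g * Fh \<le> 1"
    using mu Fh_pos Fh_le1 by (auto intro: mult_le_one)
  then show "xl \<in> {0..1}" "Fc f xl = \<mu>g * Fh" using Finv[OF dens] by (auto simp: xl_def)
qed

lemma xl_pos: "0 < xl"
proof (rule ccontr)
  assume "\<not> 0 < xl"
  then have "xl = 0" using xl by auto
  then have "Fc f xl = 0" by (simp add: Fc_eq)
  then show False using xl mu Fh_pos by simp
qed

lemma xl_lt: "xl < \<theta>h"
proof (rule ccontr)
  assume "\<not> xl < \<theta>h"
  then have "Fc f \<theta>h \<le> Fc f xl" using Fc_mono[OF dens, of \<theta>h xl] xl th by auto
  then show False using xl mu Fh_pos by (simp add: Fh_def)
qed

lemma Fx: "integral {0..xl} f = \<mu>g * Fh" using xl Fc_eq[of xl f] by simp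

lemma Tx_le: "Tx \<le> \<mu>g * Fh * \<theta>bg"
proof -
  have "cexp_le f xl = Tx / (\<mu>g * Fh)" using cexp_eq[of xl f] xl Fx by (simp add: Tx_def)
  then have "Tx / (\<mu>g * Fh) \<le> \<theta>bg" using e by (simp add: xl_def Fh_def)
  moreover have "\<mu>g * Fh > 0" using mu Fh_pos by simp
  ultimately show ?thesis by (simp add: field_simps)
qed

lemma K_pos: "\<mu>g * Th - \<mu>g * Fh * \<theta>bg = \<mu>g * Fh * (1 - \<mu>g) * (\<theta>bm - \<theta>bg)"
  "\<mu>g * Fh * (1 - \<mu>g) * (\<theta>bm - \<theta>bg) > 0"
proof -
  show "\<mu>g * Th - \<mu>g * Fh * \<theta>bg = \<mu>g * Fh * (1 - \<mu>g) * (\<theta>bm - \<theta>bg)"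
    unfolding Th_eq by (simp add: algebra_simps)
  show "\<mu>g * Fh * (1 - \<mu>g) * (\<theta>bm - \<theta>bg) > 0" using mu Fh_pos ord by simp
qed

lemma lam: "0 \<le> lam" "lam \<le> 1" "lam * (\<mu>g * Th - Tx) = \<mu>g * Th - \<mu>g * Fh * \<theta>bg"
proof -
  have dn: "\<mu>g * Th - Tx \<ge> \<mu>g * Th - \<mu>g * Fh * \<theta>bg" using Tx_le by linarith
  have kp: "\<mu>g * Th - \<mu>g * Fh * \<theta>bg > 0" using K_pos by simp
  show "0 \<le> lam" unfolding lam_def using dn kp by simp
  show "lam \<le> 1" unfolding lam_def using dn kp by simp
  show "lam * (\<mu>g * Th - Tx) = \<mu>g * Th - \<mu>g * Fh * \<theta>bg" unfolding lam_def using dn kp by simp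
qed

lemma w01: "0 \<le> w t" "w t \<le> 1"
proof -
  have "0 \<le> lam * (if t \<le> xl then 1 else 0)" "lam * (if t \<le> xl then 1 else 0) \<le> lam" using lam by auto
  moreover have "0 \<le> (1 - lam) * \<mu>g" "(1 - lam) * \<mu>g \<le> 1 - lam" using lam mu by (auto intro: mult_left_le)
  ultimately show "0 \<le> w t" "w t \<le> 1" unfolding w_def by linarith+
qed

lemma w_int: "((\<lambda>t. f t * w t) has_integral \<mu>g * Fh) {0..\<theta>h}"
  "((\<lambda>t. t * f t * w t) has_integral \<mu>g * Fh * \<theta>bg) {0..\<theta>h}"
proof -
  have sub: "{0..xl} \<subseteq> {0..\<theta>h}" using xl_lt by auto
  have r1: "((\<lambda>t. if t \<in> {0..xl} then f t else 0) has_integral \<mu>g * Fh) {0..\<theta>h}"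
  proof (subst has_integral_restrict[OF sub])
    have "(f has_integral integral {0..xl} f) {0..xl}"
      by (rule integrable_integral) (rule td_int[OF dens], use xl in auto)
    then show "(f has_integral \<mu>g * Fh) {0..xl}" unfolding Fx .
  qed
  have r2: "((\<lambda>t. if t \<in> {0..xl} then t * f t else 0) has_integral Tx) {0..\<theta>h}"
    using td_tf_int[OF dens, of 0 xl] xl sub by (subst has_integral_restrict) (auto simp: integrable_integral Tx_def)
  have g1: "(f has_integral Fh) {0..\<theta>h}" using td_int[OF dens, of 0 \<theta>h] th1 th Fh_eq by (simp add: integrable_integral)
  have g2: "((\<lambda>t. t * f t) has_integral Th) {0..\<theta>h}" using td_tf_int[OF dens, of 0 \<theta>h] th1 th by (simp add: integrable_integral Th_def)
  have H1: "((\<lambda>t. lam * (if t \<in> {0..xl} then f t else 0) + ((1 - lam) * \<mu>g) * f t) has_integral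
          (lam * (\<mu>g * Fh) + ((1 - lam) * \<mu>g) * Fh)) {0..\<theta>h}"
    by (intro has_integral_add has_integral_mult_right r1 g1)
  have E1: "lam * (if t \<in> {0..xl} then f t else 0) + ((1 - lam) * \<mu>g) * f t = f t * w t" if "t \<in> {0..\<theta>h}" for t
    using that by (auto simp: w_def algebra_simps)
  have V1: "lam * (\<mu>g * Fh) + ((1 - lam) * \<mu>g) * Fh = \<mu>g * Fh" by (simp add: algebra_simps)
  show "((\<lambda>t. f t * w t) has_integral \<mu>g * Fh) {0..\<theta>h}"
    using has_integral_eq[OF E1 H1] unfolding V1 .
  have H2: "((\<lambda>t. lam * (if t \<in> {0..xl} then t * f t else 0) + ((1 - lam) * \<mu>g) * (t * f t)) has_integral
          (lam * Tx + ((1 - lam) * \<mu>g) * Th)) {0..\<theta>h}"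
    by (intro has_integral_add has_integral_mult_right r2 g2)
  have E2: "lam * (if t \<in> {0..xl} then t * f t else 0) + ((1 - lam) * \<mu>g) * (t * f t) = t * f t * w t" if "t \<in> {0..\<theta>h}" for t
    using that by (auto simp: w_def algebra_simps)
  have V2: "lam * Tx + ((1 - lam) * \<mu>g) * Th = \<mu>g * Fh * \<theta>bg"
    using lam(3) by (simp add: algebra_simps)
  show "((\<lambda>t. t * f t * w t) has_integral \<mu>g * Fh * \<theta>bg) {0..\<theta>h}"
    using has_integral_eq[OF E2 H2] unfolding V2 .
qed

lemma w_int2: "((\<lambda>t. f t * (1 - w t)) has_integral (1 - \<mu>g) * Fh) {0..\<theta>h}"
  "((\<lambda>t. t * f t * (1 - w t)) has_integral (1 - \<mu>g) * Fh * \<theta>bm) {0..\<theta>h}"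
proof -
  have g1: "(f has_integral Fh) {0..\<theta>h}" using td_int[OF dens, of 0 \<theta>h] th1 th Fh_eq by (simp add: integrable_integral)
  have g2: "((\<lambda>t. t * f t) has_integral Th) {0..\<theta>h}" using td_tf_int[OF dens, of 0 \<theta>h] th1 th by (simp add: integrable_integral Th_def)
  have H1: "((\<lambda>t. f t - f t * w t) has_integral Fh - \<mu>g * Fh) {0..\<theta>h}"
    by (intro has_integral_diff g1 w_int)
  have V1: "Fh - \<mu>g * Fh = (1 - \<mu>g) * Fh" by (simp add: algebra_simps)
  have E1: "f t - f t * w t = f t * (1 - w t)" if "t \<in> {0..\<theta>h}" for t by (simp add: algebra_simps)
  show "((\<lambda>t. f t * (1 - w t)) has_integral (1 - \<mu>g) * Fh) {0..\<theta>h}"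
    using has_integral_eq[OF E1 H1] unfolding V1 .
  have H2: "((\<lambda>t. t * f t - t * f t * w t) has_integral Th - \<mu>g * Fh * \<theta>bg) {0..\<theta>h}"
    by (intro has_integral_diff g2 w_int)
  have V2: "Th - \<mu>g * Fh * \<theta>bg = (1 - \<mu>g) * Fh * \<theta>bm" unfolding Th_eq by (simp add: algebra_simps)
  have E2: "t * f t - t * f t * w t = t * f t * (1 - w t)" if "t \<in> {0..\<theta>h}" for t by (simp add: algebra_simps)
  show "((\<lambda>t. t * f t * (1 - w t)) has_integral (1 - \<mu>g) * Fh * \<theta>bm) {0..\<theta>h}"
    using has_integral_eq[OF E2 H2] unfolding V2 .
qed


definition "pay t p a = pay1 I S pg \<theta>bg \<theta>bm t p a"
definition "isM p t \<longleftrightarrow> pay t p Mkt > pay t p Gov \<and> pay t p Mkt > pay t p NoSale"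
definition "isG p t \<longleftrightarrow> \<not> isM p t \<and> pay t p Gov \<ge> pay t p NoSale"
definition "s1 t p a = (if p = \<theta>bm \<and> t \<le> \<theta>h then (case a of Gov \<Rightarrow> w t | Mkt \<Rightarrow> 1 - w t | NoSale \<Rightarrow> 0)
   else (case a of Gov \<Rightarrow> (if isG p t then 1 else 0) | Mkt \<Rightarrow> (if isM p t then 1 else 0)
     | NoSale \<Rightarrow> (if \<not> isM p t \<and> \<not> isG p t then 1 else 0)))"
definition "s2 t (h::act) q = (if t \<le> sale_pay I S q then 1 else (0::real))"
definition "cq q = (if q \<le> pg then \<theta>h + q - \<theta>bm else q + S)"

lemma pay_G: "pay t p Gov = pg + S + max (\<theta>bg + S) t"
  using pgI c by (simp add: pay_def pay1_def sale_pay_def)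
lemma pay_M: "q \<ge> I \<Longrightarrow> pay t q Mkt = q + S + max (\<theta>bm + S) t"
  using c ord by (simp add: pay_def pay1_def sale_pay_def)
lemma pay_N: "pay t p NoSale = t + max (\<theta>bm + S) t"
  using c ord by (simp add: pay_def pay1_def sale_pay_def)

lemma bmI: "\<theta>bm \<ge> I" using c ord by linarith

lemma low: assumes "t \<le> \<theta>h"
  shows "pay t \<theta>bm Gov = 2 * \<theta>bm + 2 * S" "pay t \<theta>bm Mkt = 2 * \<theta>bm + 2 * S" "pay t \<theta>bm NoSale < 2 * \<theta>bm + 2 * S"
proof -
  have m1: "max (\<theta>bg + S) t = \<theta>bg + S" using assms thh by simp
  have m2: "max (\<theta>bm + S) t = \<theta>bm + S" using assms thh ord by simp
  show "pay t \<theta>bm Gov = 2 * \<theta>bm + 2 * S" unfolding pay_G m1 using a by linarith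
  show "pay t \<theta>bm Mkt = 2 * \<theta>bm + 2 * S" unfolding pay_M[OF bmI] m2 by linarith
  show "pay t \<theta>bm NoSale < 2 * \<theta>bm + 2 * S" unfolding pay_N m2 using assms thh ord by linarith
qed

lemma mid: assumes "\<theta>h < t" "t \<le> pg + S" shows "isG \<theta>bm t" "\<not> isM \<theta>bm t"
proof -
  have G: "pay t \<theta>bm Gov = pg + S + t" unfolding pay_G using assms thh by simp
  have M: "pay t \<theta>bm Mkt = \<theta>bm + S + max (\<theta>bm + S) t" by (rule pay_M[OF bmI])
  have N: "pay t \<theta>bm NoSale = t + max (\<theta>bm + S) t" by (rule pay_N)
  have "pay t \<theta>bm Mkt \<le> pay t \<theta>bm Gov"
  proof (cases "t \<le> \<theta>bm + S")
    case True then show ?thesis unfolding G M using assms thh a by simp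
  next
    case False then show ?thesis unfolding G M using assms ord by simp
  qed
  moreover have "pay t \<theta>bm NoSale \<le> pay t \<theta>bm Gov"
    unfolding G N using assms ord by simp
  ultimately show "isG \<theta>bm t" "\<not> isM \<theta>bm t" unfolding isG_def isM_def by auto
qed

lemma high: assumes "pg + S < t" shows "\<not> isG \<theta>bm t" "\<not> isM \<theta>bm t"
proof -
  have G: "pay t \<theta>bm Gov = pg + S + t" unfolding pay_G using assms thh ord by simp
  have M: "pay t \<theta>bm Mkt = \<theta>bm + S + t" unfolding pay_M[OF bmI] using assms ord by simp
  have N: "pay t \<theta>bm NoSale = t + t" unfolding pay_N using assms ord by simp
  show "\<not> isM \<theta>bm t" unfolding isM_def G M N using assms ord by simp
  then show "\<not> isG \<theta>bm t" unfolding isG_def G N using assms by simp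
qed

lemma devM: assumes q: "\<theta>bm < q" shows "isM q t \<longleftrightarrow> t < cq q"
proof -
  have qI: "q \<ge> I" using q bmI by linarith
  have G: "pay t q Gov = pg + S + max (\<theta>bg + S) t" by (rule pay_G)
  have M: "pay t q Mkt = q + S + max (\<theta>bm + S) t" by (rule pay_M[OF qI])
  have N: "pay t q NoSale = t + max (\<theta>bm + S) t" by (rule pay_N)
  have th': "\<theta>bg + S = \<theta>h" using thh by simp
  show ?thesis
  proof (cases "q \<le> pg")
    case True
    then have cqq: "cq q = \<theta>h + q - \<theta>bm" by (simp add: cq_def)
    show ?thesis unfolding isM_def G M N cqq th' using True q ord a thh
      by (auto simp: max_def split: if_splits)
  next
    case False
    then have cqq: "cq q = q + S" by (simp add: cq_def)
    show ?thesis unfolding isM_def G M N cqq th' using False q ord a thh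
      by (auto simp: max_def split: if_splits)
  qed
qed

lemma s1_sum: "s1 t p Gov + s1 t p Mkt + s1 t p NoSale = 1"
  unfolding s1_def isG_def by auto

lemma s1_nonneg: "0 \<le> s1 t p a"
  unfolding s1_def using w01 by (cases a) auto

lemma opt: assumes "s1 t p a > 0" shows "pay t p b \<le> pay t p a"
proof (cases "p = \<theta>bm \<and> t \<le> \<theta>h")
  case True
  then have pa: "a = Gov \<or> a = Mkt" using assms by (cases a) (auto simp: s1_def)
  have "t \<le> \<theta>h" "p = \<theta>bm" using True by auto
  note L = low[OF this(1)]
  show ?thesis using pa L \<open>p = \<theta>bm\<close> by (cases b) auto
next
  case False
  then have s: "s1 t p a = (case a of Gov \<Rightarrow> (if isG p t then 1 else 0) | Mkt \<Rightarrow> (if isM p t then 1 else 0)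
     | NoSale \<Rightarrow> (if \<not> isM p t \<and> \<not> isG p t then 1 else 0))" unfolding s1_def if_not_P[OF False] by simp
  show ?thesis
  proof (cases a)
    case Gov
    then have "isG p t" using assms s by (auto split: if_splits)
    then show ?thesis using Gov unfolding isG_def isM_def by (cases b) auto
  next
    case Mkt
    then have "isM p t" using assms s by (auto split: if_splits)
    then show ?thesis using Mkt unfolding isM_def by (cases b) auto
  next
    case NoSale
    then have "\<not> isM p t \<and> \<not> isG p t" using assms s by (auto split: if_splits)
    then show ?thesis using NoSale unfolding isG_def isM_def by (cases b) auto
  qed
qed

lemma pay_meas[measurable]: "(\<lambda>t. pay t p a) \<in> borel_measurable borel"
  unfolding pay_def pay1_def by (cases a) simp_all

lemma w_meas[measurable]: "w \<in> borel_measurable borel"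
  unfolding w_def by measurable

lemma s1_meas: "(\<lambda>t. s1 t p a) \<in> borel_measurable borel"
proof (cases a)
  case Gov
  have "(\<lambda>t. if p = \<theta>bm \<and> t \<le> \<theta>h then w t else (if isG p t then 1 else 0::real)) \<in> borel_measurable borel"
    unfolding isG_def isM_def by measurable
  then show ?thesis unfolding Gov s1_def by (simp only: act.case)
next
  case Mkt
  have "(\<lambda>t. if p = \<theta>bm \<and> t \<le> \<theta>h then 1 - w t else (if isM p t then 1 else 0::real)) \<in> borel_measurable borel"
    unfolding isG_def isM_def by measurable
  then show ?thesis unfolding Mkt s1_def by (simp only: act.case)
next
  case NoSale
  have "(\<lambda>t. if p = \<theta>bm \<and> t \<le> \<theta>h then 0 else (if \<not> isM p t \<and> \<not> isG p t then 1 else 0::real)) \<in> borel_measurable borel"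
    unfolding isG_def isM_def by measurable
  then show ?thesis unfolding NoSale s1_def by (simp only: act.case)
qed

lemma s2_meas: "(\<lambda>t. s2 t h q) \<in> borel_measurable borel"
  unfolding s2_def by measurable

lemma s1Gov: "s1 t \<theta>bm Gov = (if t \<le> \<theta>h then w t else if t \<le> pg + S then 1 else 0)"
proof -
  consider "t \<le> \<theta>h" | "\<theta>h < t" "t \<le> pg + S" | "pg + S < t" by linarith
  then show ?thesis
  proof cases
    case 1 then show ?thesis using th1 by (auto simp: s1_def)
  next
    case 2 then show ?thesis using mid[of t] by (auto simp: s1_def)
  next
    case 3 then show ?thesis using high[of t] th1 by (auto simp: s1_def)
  qed
qed
lemma s1Mkt: "s1 t \<theta>bm Mkt = (if t \<le> \<theta>h then 1 - w t else 0)"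
proof -
  consider "t \<le> \<theta>h" | "\<theta>h < t" "t \<le> pg + S" | "pg + S < t" by linarith
  then show ?thesis
  proof cases
    case 1 then show ?thesis using th1 by (auto simp: s1_def)
  next
    case 2 then show ?thesis using mid[of t] by (auto simp: s1_def)
  next
    case 3 then show ?thesis using high[of t] th1 by (auto simp: s1_def)
  qed
qed
lemma s1No: "s1 t \<theta>bm NoSale = (if t \<le> pg + S then 0 else 1)"
proof -
  consider "t \<le> \<theta>h" | "\<theta>h < t" "t \<le> pg + S" | "pg + S < t" by linarith
  then show ?thesis
  proof cases
    case 1 then show ?thesis using th1 by (auto simp: s1_def)
  next
    case 2 then show ?thesis using mid[of t] by (auto simp: s1_def)
  next
    case 3 then show ?thesis using high[of t] th1 by (auto simp: s1_def)
  qed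
qed
lemma s1dev: "q \<noteq> \<theta>bm \<Longrightarrow> s1 t q Mkt = (if isM q t then 1 else 0)"
  by (simp add: s1_def)


lemma Fnn: assumes "0 \<le> x" "y \<le> 1" shows "0 \<le> integral {x..y} f"
proof (rule has_integral_nonneg[OF integrable_integral[OF td_int[OF dens assms]]])
  fix t assume "t \<in> {x..y}"
  then have "t \<in> {0..1}" using assms by auto
  then show "0 \<le> f t" using td_pos[OF dens] less_imp_le by blast
qed

lemma Fc_diff: "0 \<le> a \<Longrightarrow> a \<le> b \<Longrightarrow> b \<le> 1 \<Longrightarrow> Fc f b - Fc f a = integral {a..b} f"
  using int_split(1)[OF dens, of a b] Fc_eq[of a f] Fc_eq[of b f] by auto

lemma divlt: "(D::real) > 0 \<Longrightarrow> N / D - q < 0 \<Longrightarrow> N - q * D < 0"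
  by (simp add: divide_less_eq algebra_simps)

lemma int_pt: "integral {x..x::real} g = (0::real)" by simp

lemma comp1: "competitive_price (\<lambda>q t. f t * s1 t q Mkt) \<theta>bm"
  unfolding competitive_price_def
proof (intro conjI impI allI)
  have W: "f t * s1 t \<theta>bm Mkt = (if t \<le> \<theta>h then f t * (1 - w t) else if \<theta>h < t \<and> t \<le> \<theta>h then f t else 0)" for t
    by (simp add: s1Mkt)
  note P = piece2[OF dens th(1) order.refl order.refl less_imp_le[OF th1(1)] w_int2, where W="\<lambda>t. f t * s1 t \<theta>bm Mkt", OF W]
  have i1: "integral {0..1} (\<lambda>t. f t * s1 t \<theta>bm Mkt) = (1 - \<mu>g) * Fh" using integral_unique[OF P(1)] by simp
  have i2: "integral {0..1} (\<lambda>t. t * (f t * s1 t \<theta>bm Mkt)) = (1 - \<mu>g) * Fh * \<theta>bm" using integral_unique[OF P(2)] by simp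
  show "integral {0..1} (\<lambda>t. t * (f t * s1 t \<theta>bm Mkt)) = \<theta>bm * integral {0..1} (\<lambda>t. f t * s1 t \<theta>bm Mkt)"
    unfolding i1 i2 by simp
next
  fix q assume q: "\<theta>bm < q"
  have cpos: "cq q > \<theta>h" using q ord th1 by (auto simp: cq_def)
  have W: "f t * s1 t q Mkt = (if t < cq q then f t else 0)" for t
    using s1dev[of q t] devM[OF q, of t] q by auto
  note P = seg[OF dens _ W] 
  define c' where "c' = min (cq q) 1"
  have c'1: "\<theta>h < c'" "c' \<le> 1" using cpos th1 by (auto simp: c'_def)
  have i1: "integral {0..1} (\<lambda>t. f t * s1 t q Mkt) = integral {0..c'} f"
    using integral_unique[OF P(1)] cpos th by (simp add: c'_def)
  have i2: "integral {0..1} (\<lambda>t. t * (f t * s1 t q Mkt)) = integral {0..c'} (\<lambda>t. t * f t)"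
    using integral_unique[OF P(2)] cpos th by (simp add: c'_def)
  have Fc': "integral {0..c'} f > 0" using td_Fpos[OF dens, of 0 c'] c'1 th by simp
  have "integral {0..c'} (\<lambda>t. t * f t) / integral {0..c'} f \<le> q"
  proof (cases "q \<le> pg")
    case True
    have "integral {0..c'} (\<lambda>t. t * f t) / integral {0..c'} f - (c' - \<theta>h) \<le> Th / Fh"
      using psi_mono[OF dens th(1) c'1] by (simp add: Th_def Fh_eq)
    moreover have "Th / Fh < \<theta>bm" unfolding cexp_h using mu ord
    proof -
      have "\<mu>g * \<theta>bg < \<mu>g * \<theta>bm" using mu ord by simp
      then show "\<mu>g * \<theta>bg + (1 - \<mu>g) * \<theta>bm < \<theta>bm" by (simp add: algebra_simps)
    qed
    moreover have "c' \<le> \<theta>h + q - \<theta>bm" using True by (simp add: c'_def cq_def)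
    ultimately show ?thesis by linarith
  next
    case False
    have t0: "\<theta>0 = p0 + S" using theta0(3) p0_def by simp
    have c0: "\<theta>0 < c'" using t0 pg False theta0 by (auto simp: c'_def cq_def)
    have "integral {0..c'} (\<lambda>t. t * f t) / integral {0..c'} f - (c' - \<theta>0) \<le> cexp_le f \<theta>0"
      using psi_mono[OF dens theta0(1) c0 c'1(2)] cexp_eq[of \<theta>0 f] theta0 by simp
    moreover have "c' \<le> q + S" using False by (simp add: c'_def cq_def)
    ultimately show ?thesis using theta0(3) by linarith
  qed
  then have "integral {0..c'} (\<lambda>t. t * f t) \<le> q * integral {0..c'} f" using Fc' by (simp add: divide_le_eq)
  then show "integral {0..1} (\<lambda>t. t * (f t * s1 t q Mkt)) - q * integral {0..1} (\<lambda>t. f t * s1 t q Mkt) \<le> 0"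
    unfolding i1 i2 by simp
qed


lemma s2q: "q \<ge> I \<Longrightarrow> s2 t h q = (if t \<le> q + S then 1 else 0)"
  by (simp add: s2_def sale_pay_def)

lemma comp2: "competitive_price (\<lambda>q t. f t * s1 t \<theta>bm Gov * s2 t Gov q) \<theta>bg"
proof -
  have main: "integral {0..1} (\<lambda>t. f t * s1 t \<theta>bm Gov * s2 t Gov q) = \<mu>g * Fh + integral {\<theta>h..min (q + S) (pg + S)} f \<and>
    integral {0..1} (\<lambda>t. t * (f t * s1 t \<theta>bm Gov * s2 t Gov q)) = \<mu>g * Fh * \<theta>bg + integral {\<theta>h..min (q + S) (pg + S)} (\<lambda>t. t * f t)"
    if q: "\<theta>bg \<le> q" for q
  proof -
    have qI: "q \<ge> I" using q c by linarith
    define e where "e = min (q + S) (pg + S)"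
    have e: "\<theta>h \<le> e" "e \<le> 1" using q thh th1 pgS by (auto simp: e_def)
    have W: "f t * s1 t \<theta>bm Gov * s2 t Gov q = (if t \<le> \<theta>h then f t * w t else if \<theta>h < t \<and> t \<le> e then f t else 0)" for t
    proof -
      have hq: "\<theta>h \<le> q + S" using q thh by linarith
      consider "t \<le> \<theta>h" | "\<theta>h < t" "t \<le> pg + S" | "pg + S < t" by linarith
      then show ?thesis
      proof cases
        case 1 then show ?thesis using hq th1 by (simp add: s1Gov s2q[OF qI] e_def)
      next
        case 2 then show ?thesis using hq by (auto simp: s1Gov s2q[OF qI] e_def)
      next
        case 3 then show ?thesis using hq th1 by (auto simp: s1Gov s2q[OF qI] e_def)
      qed
    qed
    note P = piece2[OF dens th(1) order.refl e w_int, where W="\<lambda>t. f t * s1 t \<theta>bm Gov * s2 t Gov q", OF W]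
    show ?thesis using integral_unique[OF P(1)] integral_unique[OF P(2)] by (simp add: e_def)
  qed
  show ?thesis unfolding competitive_price_def
  proof (intro conjI impI allI)
    have e0: "min (\<theta>bg + S) (pg + S) = \<theta>h" using thh th1 by simp
    show "integral {0..1} (\<lambda>t. t * (f t * s1 t \<theta>bm Gov * s2 t Gov \<theta>bg)) =
        \<theta>bg * integral {0..1} (\<lambda>t. f t * s1 t \<theta>bm Gov * s2 t Gov \<theta>bg)"
      using main[of \<theta>bg] e0 by (simp add: algebra_simps)
  next
    fix q assume q: "\<theta>bg < q"
    note M = main[of q] 
    define e where "e = min (q + S) (pg + S)"
    have e: "\<theta>h \<le> e" "e \<le> 1" using q thh th1 pgS by (auto simp: e_def)
    define N where "N = \<mu>g * Fh * \<theta>bg + integral {\<theta>h..e} (\<lambda>t. t * f t)"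
    define D where "D = \<mu>g * Fh + integral {\<theta>h..e} f"
    have Dp: "D > 0" unfolding D_def using Fnn[of \<theta>h e] e th mu Fh_pos by (simp add: add_pos_nonneg)
    have "N - q * D < 0"
    proof (cases "q \<le> pg")
      case True
      then have ee: "e = q + S" by (simp add: e_def)
      have fd: "(\<mu>g * Fc f \<theta>h * \<theta>bg + integral {\<theta>h..q + S} (\<lambda>t. t * f t)) /
         (\<mu>g * Fc f \<theta>h + Fc f (q + S) - Fc f \<theta>h) - q < 0" using f_dev q True by auto
      have "Fc f (q + S) - Fc f \<theta>h = integral {\<theta>h..e} f" using Fc_diff[of \<theta>h "q + S"] e ee th by simp
      then have "(\<mu>g * Fc f \<theta>h + Fc f (q + S) - Fc f \<theta>h) = D" by (simp add: D_def Fh_def)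
      moreover have "\<mu>g * Fc f \<theta>h * \<theta>bg + integral {\<theta>h..q + S} (\<lambda>t. t * f t) = N" by (simp add: N_def ee Fh_def)
      ultimately show ?thesis using divlt[OF Dp] fd by simp
    next
      case False
      then have ee: "e = pg + S" by (simp add: e_def)
      have fd: "(\<mu>g * Fc f \<theta>h * \<theta>bg + integral {\<theta>h..pg + S} (\<lambda>t. t * f t)) /
         (\<mu>g * Fc f \<theta>h + Fc f (pg + S) - Fc f \<theta>h) - pg < 0" using f_dev ord by auto
      have "Fc f (pg + S) - Fc f \<theta>h = integral {\<theta>h..e} f" using Fc_diff[of \<theta>h "pg + S"] e ee th by simp
      then have "(\<mu>g * Fc f \<theta>h + Fc f (pg + S) - Fc f \<theta>h) = D" by (simp add: D_def Fh_def)
      moreover have "\<mu>g * Fc f \<theta>h * \<theta>bg + integral {\<theta>h..pg + S} (\<lambda>t. t * f t) = N" by (simp add: N_def ee Fh_def)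
      ultimately have "N - pg * D < 0" using divlt[OF Dp] fd by simp
      moreover have "pg * D \<le> q * D" using False Dp by simp
      ultimately show ?thesis by linarith
    qed
    then show "integral {0..1} (\<lambda>t. t * (f t * s1 t \<theta>bm Gov * s2 t Gov q)) -
         q * integral {0..1} (\<lambda>t. f t * s1 t \<theta>bm Gov * s2 t Gov q) \<le> 0"
      using M q by (simp add: N_def D_def e_def algebra_simps)
  qed
qed

lemma comp3: "competitive_price
       (\<lambda>q t. f t * (s1 t \<theta>bm Mkt * s2 t Mkt q + s1 t \<theta>bm NoSale * s2 t NoSale q)) \<theta>bm"
proof -
  have main: "integral {0..1} (\<lambda>t. f t * (s1 t \<theta>bm Mkt * s2 t Mkt q + s1 t \<theta>bm NoSale * s2 t NoSale q)) = (1 - \<mu>g) * Fh + integral {pg + S..max (pg + S) (min (q + S) 1)} f \<and>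
    integral {0..1} (\<lambda>t. t * (f t * (s1 t \<theta>bm Mkt * s2 t Mkt q + s1 t \<theta>bm NoSale * s2 t NoSale q))) = (1 - \<mu>g) * Fh * \<theta>bm + integral {pg + S..max (pg + S) (min (q + S) 1)} (\<lambda>t. t * f t)"
    if q: "\<theta>bm \<le> q" for q
  proof -
    have qI: "q \<ge> I" using q bmI by linarith
    define u where "u = max (pg + S) (min (q + S) 1)"
    have u: "\<theta>h \<le> pg + S" "pg + S \<le> u" "u \<le> 1" using th1 pgS by (auto simp: u_def)
    have W: "f t * (s1 t \<theta>bm Mkt * s2 t Mkt q + s1 t \<theta>bm NoSale * s2 t NoSale q) =
       (if t \<le> \<theta>h then f t * (1 - w t) else if pg + S < t \<and> t \<le> u then f t else 0)" if t: "t \<in> {0..1}" for t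
    proof -
      have hq: "\<theta>h \<le> q + S" using q thh ord by linarith
      consider "t \<le> \<theta>h" | "\<theta>h < t" "t \<le> pg + S" | "pg + S < t" by linarith
      then show ?thesis
      proof cases
        case 1 then show ?thesis using hq th1 by (simp add: s1Mkt s1No s2q[OF qI])
      next
        case 2 then show ?thesis using hq by (auto simp: s1Mkt s1No s2q[OF qI])
      next
        case 3 then show ?thesis using hq th1 t by (auto simp: s1Mkt s1No s2q[OF qI] u_def)
      qed
    qed
    note P = piece2[OF dens th(1) u w_int2, where W="\<lambda>t. f t * (s1 t \<theta>bm Mkt * s2 t Mkt q + s1 t \<theta>bm NoSale * s2 t NoSale q)", OF W]
    show ?thesis using integral_unique[OF P(1)] integral_unique[OF P(2)] by (simp add: u_def)
  qed
  show ?thesis unfolding competitive_price_def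
  proof (intro conjI impI allI)
    have e0: "max (pg + S) (min (\<theta>bm + S) 1) = pg + S" using ord by simp
    show "integral {0..1} (\<lambda>t. t * (f t * (s1 t \<theta>bm Mkt * s2 t Mkt \<theta>bm + s1 t \<theta>bm NoSale * s2 t NoSale \<theta>bm))) =
        \<theta>bm * integral {0..1} (\<lambda>t. f t * (s1 t \<theta>bm Mkt * s2 t Mkt \<theta>bm + s1 t \<theta>bm NoSale * s2 t NoSale \<theta>bm))"
    proof -
      note m = main[of \<theta>bm, unfolded e0 int_pt, simplified]
      show ?thesis by (simp only: m) (simp add: algebra_simps)
    qed
  next
    fix q assume q: "\<theta>bm < q"
    note M = main[of q]
    define u where "u = max (pg + S) (min (q + S) 1)"
    have u: "pg + S \<le> u" "u \<le> 1" using pgS by (auto simp: u_def)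
    define N where "N = (1 - \<mu>g) * Fh * \<theta>bm + integral {pg + S..u} (\<lambda>t. t * f t)"
    define D where "D = (1 - \<mu>g) * Fh + integral {pg + S..u} f"
    have Dp: "D > 0" unfolding D_def using Fnn[of "pg + S" u] u pg S_pos mu Fh_pos p0_I I_pos
      by (intro add_pos_nonneg) auto
    have "N - q * D < 0"
    proof (cases "q \<le> pg")
      case True
      then have uu: "u = pg + S" by (simp add: u_def)
      have "N - q * D = (1 - \<mu>g) * Fh * (\<theta>bm - q)" by (simp add: N_def D_def uu algebra_simps)
      moreover have "(1 - \<mu>g) * Fh * (\<theta>bm - q) < 0" using mu Fh_pos q by (simp add: mult_pos_neg)
      ultimately show ?thesis by simp
    next
      case False
      define p' where "p' = min q (1 - S)"
      have p': "p' \<in> {pg<..1 - S}" using False pg by (auto simp: p'_def)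
      have uu: "u = p' + S" using False pgS by (auto simp: u_def p'_def)
      have gd: "((1 - \<mu>g) * Fc f \<theta>h * \<theta>bm + integral {min (pg + S) 1..p' + S} (\<lambda>t. t * f t)) /
       ((1 - \<mu>g) * Fc f \<theta>h + Fc f (p' + S) - Fc f (min (pg + S) 1)) - p' < 0" using g_dev p' by blast
      have "Fc f (p' + S) - Fc f (pg + S) = integral {pg + S..u} f" using Fc_diff[of "pg + S" "p' + S"] u uu pg S_pos p0_I I_pos by simp
      then have "((1 - \<mu>g) * Fc f \<theta>h + Fc f (p' + S) - Fc f (min (pg + S) 1)) = D" by (simp add: D_def Fh_def minpg)
      moreover have "(1 - \<mu>g) * Fc f \<theta>h * \<theta>bm + integral {min (pg + S) 1..p' + S} (\<lambda>t. t * f t) = N" by (simp add: N_def uu Fh_def minpg)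
      ultimately have "N - p' * D < 0" using divlt[OF Dp] gd by simp
      moreover have "p' * D \<le> q * D" using Dp by (simp add: p'_def)
      ultimately show ?thesis by linarith
    qed
    then show "integral {0..1} (\<lambda>t. t * (f t * (s1 t \<theta>bm Mkt * s2 t Mkt q + s1 t \<theta>bm NoSale * s2 t NoSale q))) -
         q * integral {0..1} (\<lambda>t. f t * (s1 t \<theta>bm Mkt * s2 t Mkt q + s1 t \<theta>bm NoSale * s2 t NoSale q)) \<le> 0"
    proof -
      have mm: "integral {0..1} (\<lambda>t. f t * (s1 t \<theta>bm Mkt * s2 t Mkt q + s1 t \<theta>bm NoSale * s2 t NoSale q)) = D"
        "integral {0..1} (\<lambda>t. t * (f t * (s1 t \<theta>bm Mkt * s2 t Mkt q + s1 t \<theta>bm NoSale * s2 t NoSale q))) = N"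
        using M[OF less_imp_le[OF q]] unfolding D_def N_def u_def by blast+
      show ?thesis unfolding mm using \<open>N - q * D < 0\<close> by linarith
    qed
  qed
qed


lemma main: "\<exists>s1 s2.
     transparent_equilibrium f I S pg s1 s2 \<theta>bm \<theta>bg \<theta>bm \<and>
     (\<forall>t\<in>{0..\<theta>h}. s1 t \<theta>bm NoSale = 0 \<and> s2 t Gov \<theta>bg = 1 \<and> s2 t Mkt \<theta>bm = 1) \<and>
     integral {0..\<theta>h} (\<lambda>t. f t * s1 t \<theta>bm Gov) = \<mu>g * Fc f \<theta>h \<and>
     integral {0..\<theta>h} (\<lambda>t. t * f t * s1 t \<theta>bm Gov) = \<mu>g * Fc f \<theta>h * \<theta>bg \<and>
     integral {0..\<theta>h} (\<lambda>t. f t * s1 t \<theta>bm Mkt) = (1 - \<mu>g) * Fc f \<theta>h \<and>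
     integral {0..\<theta>h} (\<lambda>t. t * f t * s1 t \<theta>bm Mkt) = (1 - \<mu>g) * Fc f \<theta>h * \<theta>bm \<and>
     (\<forall>t\<in>{\<theta>h<..min (pg + S) 1}. s1 t \<theta>bm Gov = 1 \<and> s2 t Gov \<theta>bg = 0) \<and>
     (\<forall>t\<in>{min (pg + S) 1<..1}. s1 t \<theta>bm NoSale = 1 \<and> s2 t NoSale \<theta>bm = 0)"
proof (rule exI[of _ s1], rule exI[of _ s2], intro conjI)
  show "transparent_equilibrium f I S pg s1 s2 \<theta>bm \<theta>bg \<theta>bm"
    unfolding transparent_equilibrium_def
  proof (intro conjI)
    show "\<forall>t p a. 0 \<le> s1 t p a" using s1_nonneg by blast
    show "\<forall>t p. s1 t p Gov + s1 t p Mkt + s1 t p NoSale = 1" using s1_sum by blast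
    show "\<forall>t h q. 0 \<le> s2 t h q \<and> s2 t h q \<le> 1" by (simp add: s2_def)
    show "\<forall>p a. (\<lambda>t. s1 t p a) \<in> borel_measurable borel" using s1_meas by blast
    show "\<forall>h q. (\<lambda>t. s2 t h q) \<in> borel_measurable borel" using s2_meas by blast
    show "\<forall>t\<in>{0..1}. \<forall>h q. (t < sale_pay I S q \<longrightarrow> s2 t h q = 1) \<and> (sale_pay I S q < t \<longrightarrow> s2 t h q = 0)"
      by (simp add: s2_def)
    show "\<forall>t\<in>{0..1}. \<forall>p a. 0 < s1 t p a \<longrightarrow> (\<forall>b. pay1 I S pg \<theta>bg \<theta>bm t p b \<le> pay1 I S pg \<theta>bg \<theta>bm t p a)"
      using opt unfolding pay_def by blast
    show "competitive_price (\<lambda>q t. f t * s1 t q Mkt) \<theta>bm" by (rule comp1)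
    show "competitive_price (\<lambda>q t. f t * s1 t \<theta>bm Gov * s2 t Gov q) \<theta>bg" by (rule comp2)
    show "competitive_price (\<lambda>q t. f t * (s1 t \<theta>bm Mkt * s2 t Mkt q + s1 t \<theta>bm NoSale * s2 t NoSale q)) \<theta>bm"
      by (rule comp3)
  qed
  show "\<forall>t\<in>{0..\<theta>h}. s1 t \<theta>bm NoSale = 0 \<and> s2 t Gov \<theta>bg = 1 \<and> s2 t Mkt \<theta>bm = 1"
  proof
    fix t assume t: "t \<in> {0..\<theta>h}"
    have h1: "t \<le> pg + S" "t \<le> \<theta>bg + S" "t \<le> \<theta>bm + S" using t th1 thh ord by auto
    show "s1 t \<theta>bm NoSale = 0 \<and> s2 t Gov \<theta>bg = 1 \<and> s2 t Mkt \<theta>bm = 1"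
      using h1 by (simp add: s1No s2q[OF c] s2q[OF bmI])
  qed
  have EG: "f t * w t = f t * s1 t \<theta>bm Gov" "t * f t * w t = t * f t * s1 t \<theta>bm Gov" if "t \<in> {0..\<theta>h}" for t
    using that by (auto simp: s1Gov)
  have EM: "f t * (1 - w t) = f t * s1 t \<theta>bm Mkt" "t * f t * (1 - w t) = t * f t * s1 t \<theta>bm Mkt" if "t \<in> {0..\<theta>h}" for t
    using that by (auto simp: s1Mkt)
  show "integral {0..\<theta>h} (\<lambda>t. f t * s1 t \<theta>bm Gov) = \<mu>g * Fc f \<theta>h"
    using integral_unique[OF has_integral_eq[OF EG(1) w_int(1)]] by (simp add: Fh_def)
  show "integral {0..\<theta>h} (\<lambda>t. t * f t * s1 t \<theta>bm Gov) = \<mu>g * Fc f \<theta>h * \<theta>bg"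
    using integral_unique[OF has_integral_eq[OF EG(2) w_int(2)]] by (simp add: Fh_def)
  show "integral {0..\<theta>h} (\<lambda>t. f t * s1 t \<theta>bm Mkt) = (1 - \<mu>g) * Fc f \<theta>h"
    using integral_unique[OF has_integral_eq[OF EM(1) w_int2(1)]] by (simp add: Fh_def)
  show "integral {0..\<theta>h} (\<lambda>t. t * f t * s1 t \<theta>bm Mkt) = (1 - \<mu>g) * Fc f \<theta>h * \<theta>bm"
    using integral_unique[OF has_integral_eq[OF EM(2) w_int2(2)]] by (simp add: Fh_def)
  show "\<forall>t\<in>{\<theta>h<..min (pg + S) 1}. s1 t \<theta>bm Gov = 1 \<and> s2 t Gov \<theta>bg = 0"
  proof
    fix t assume t: "t \<in> {\<theta>h<..min (pg + S) 1}"
    have h1: "\<theta>h < t" "t \<le> pg + S" "\<not> t \<le> \<theta>bg + S" using t minpg thh by auto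
    show "s1 t \<theta>bm Gov = 1 \<and> s2 t Gov \<theta>bg = 0"
      using h1 by (simp add: s1Gov s2q[OF c])
  qed
  show "\<forall>t\<in>{min (pg + S) 1<..1}. s1 t \<theta>bm NoSale = 1 \<and> s2 t NoSale \<theta>bm = 0"
  proof
    fix t assume t: "t \<in> {min (pg + S) 1<..1}"
    have h1: "\<not> t \<le> pg + S" "\<not> t \<le> \<theta>bm + S" using t minpg ord by auto
    show "s1 t \<theta>bm NoSale = 1 \<and> s2 t NoSale \<theta>bm = 0"
      using h1 by (simp add: s1No s2q[OF bmI])
  qed
qed

end


theorem propositionB1:
  fixes f :: "real \<Rightarrow> real"
    and I S \<theta>0 p0 pg \<mu>g \<theta>bg \<theta>bm \<theta>h :: real
  assumes dens: "type_density f"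
    and I_pos: "I > 0" and S_pos: "S > 0"
    and theta0: "0 < \<theta>0" "\<theta>0 < 1" "\<theta>0 - S = cexp_le f \<theta>0"
    and theta0_unique: "\<forall>x\<in>{0<..<1}. x - S = cexp_le f x \<longrightarrow> x = \<theta>0"
    and p0_def: "p0 = cexp_le f \<theta>0" and p0_I: "p0 \<ge> I"
    and pg: "p0 < pg" "pg < 1 - S"
    and mu: "0 < \<mu>g" "\<mu>g < 1"
    and ord: "\<theta>bg < \<theta>bm" "\<theta>bm < pg"
    and th: "0 < \<theta>h" "\<theta>h < min (pg + S) 1"
    and a: "pg + \<theta>bg = 2 * \<theta>bm"
    and b: "2 * \<theta>bm + 2 * S = \<theta>h + pg + S"
    and c: "\<theta>bg \<ge> I"
    and d: "\<mu>g * \<theta>bg + (1 - \<mu>g) * \<theta>bm = cexp_le f \<theta>h"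
    and e: "\<theta>bg \<ge> cexp_le f (Finv f (\<mu>g * Fc f \<theta>h))"
    and f_dev: "\<forall>p'\<in>{\<theta>bg<..pg}.
       (\<mu>g * Fc f \<theta>h * \<theta>bg + integral {\<theta>h..p' + S} (\<lambda>t. t * f t)) /
       (\<mu>g * Fc f \<theta>h + Fc f (p' + S) - Fc f \<theta>h) - p' < 0"
    and g_dev: "\<forall>p'\<in>{pg<..1 - S}.
       ((1 - \<mu>g) * Fc f \<theta>h * \<theta>bm + integral {min (pg + S) 1..p' + S} (\<lambda>t. t * f t)) /
       ((1 - \<mu>g) * Fc f \<theta>h + Fc f (p' + S) - Fc f (min (pg + S) 1)) - p' < 0"
  shows "\<exists>s1 s2.
     transparent_equilibrium f I S pg s1 s2 \<theta>bm \<theta>bg \<theta>bm \<and>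
     \<comment> \<open>types up to \<theta>h sell in both periods\<close>
     (\<forall>t\<in>{0..\<theta>h}. s1 t \<theta>bm NoSale = 0 \<and> s2 t Gov \<theta>bg = 1 \<and> s2 t Mkt \<theta>bm = 1) \<and>
     \<comment> \<open>a fraction \<mu>g of them, with average value \<theta>bg, to the government\<close>
     integral {0..\<theta>h} (\<lambda>t. f t * s1 t \<theta>bm Gov) = \<mu>g * Fc f \<theta>h \<and>
     integral {0..\<theta>h} (\<lambda>t. t * f t * s1 t \<theta>bm Gov) = \<mu>g * Fc f \<theta>h * \<theta>bg \<and>
     \<comment> \<open>the rest, with average value \<theta>bm, to the market\<close>
     integral {0..\<theta>h} (\<lambda>t. f t * s1 t \<theta>bm Mkt) = (1 - \<mu>g) * Fc f \<theta>h \<and>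
     integral {0..\<theta>h} (\<lambda>t. t * f t * s1 t \<theta>bm Mkt) = (1 - \<mu>g) * Fc f \<theta>h * \<theta>bm \<and>
     \<comment> \<open>types in (\<theta>h, \<theta>hg] sell only to the government at t=1\<close>
     (\<forall>t\<in>{\<theta>h<..min (pg + S) 1}. s1 t \<theta>bm Gov = 1 \<and> s2 t Gov \<theta>bg = 0) \<and>
     \<comment> \<open>types above \<theta>hg never sell\<close>
     (\<forall>t\<in>{min (pg + S) 1<..1}. s1 t \<theta>bm NoSale = 1 \<and> s2 t NoSale \<theta>bm = 0)"
  proof -
  have "B1 f I S \<theta>0 p0 pg \<mu>g \<theta>bg \<theta>bm \<theta>h"
    by (rule B1.intro) (fact+)
  from B1.main[OF this] show ?thesis .
qed

end
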